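(* Let $m$ and $k$ be positive integers such that $m\ge k+3$ and $2m-1<R(m-k,3)$. Suppose that $F_v(2_r;r-k+1)\ge r+m$ for every integer $r\ge m-1$. Then $F_v(2_r;r-k+1)=r+m$ for every integer $r\ge m-1$.
   Context: All graphs are finite, simple and undirected. $\mathrm{cl}(G)$ is the clique number of $G$. $G\overset{v}{\to}(2_r)$ means that in every partition of $V(G)$ into $r$ pairwise disjoint parts some part contains an edge (equivalently $\chi(G)\ge r+1$). $H_v(2_r;q)$ is the set of graphs $G$ with $G\overset{v}{\to}(2_r)$ and $\mathrm{cl}(G)<q$; $F_v(2_r;q)=\min\{|V(G)|:G\in H_v(2_r;q)\}$. The Ramsey number $R(p,3)$ is the least $n$ such that every graph on at least $n$ vertices has a $p$-clique or an independent set of size $3$. *)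

theory Defs
  imports Main
begin

definition simple_graph :: "nat set \<Rightarrow> (nat \<Rightarrow> nat \<Rightarrow> bool) \<Rightarrow> bool" where
  "simple_graph V E \<longleftrightarrow> finite V \<and>
     (\<forall>u v. E u v \<longrightarrow> u \<in> V \<and> v \<in> V \<and> u \<noteq> v \<and> E v u)"

definition is_clique :: "nat set \<Rightarrow> (nat \<Rightarrow> nat \<Rightarrow> bool) \<Rightarrow> nat set \<Rightarrow> bool" where
  "is_clique V E K \<longleftrightarrow> K \<subseteq> V \<and> (\<forall>u\<in>K. \<forall>v\<in>K. u \<noteq> v \<longrightarrow> E u v)"

definition is_indep :: "nat set \<Rightarrow> (nat \<Rightarrow> nat \<Rightarrow> bool) \<Rightarrow> nat set \<Rightarrow> bool" where
  "is_indep V E S \<longleftrightarrow> S \<subseteq> V \<and> (\<forall>u\<in>S. \<forall>v\<in>S. \<not> E u v)"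

definition clique_num :: "nat set \<Rightarrow> (nat \<Rightarrow> nat \<Rightarrow> bool) \<Rightarrow> nat" where
  "clique_num V E = Max {card K | K. is_clique V E K}"

text \<open>G -v-> (2_r): every partition of V into r parts (colouring with colours < r)
  has a part containing an edge.\<close>
definition vertex_arrow :: "nat set \<Rightarrow> (nat \<Rightarrow> nat \<Rightarrow> bool) \<Rightarrow> nat \<Rightarrow> bool" where
  "vertex_arrow V E r \<longleftrightarrow>
     (\<forall>f :: nat \<Rightarrow> nat. (\<forall>v\<in>V. f v < r) \<longrightarrow> (\<exists>u\<in>V. \<exists>v\<in>V. E u v \<and> f u = f v))"

definition H_v :: "nat \<Rightarrow> nat \<Rightarrow> (nat set \<times> (nat \<Rightarrow> nat \<Rightarrow> bool)) set" where
  "H_v r q = {(V, E). simple_graph V E \<and> vertex_arrow V E r \<and> clique_num V E < q}"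

definition F_v :: "nat \<Rightarrow> nat \<Rightarrow> nat" where
  "F_v r q = (LEAST n. \<exists>V E. (V, E) \<in> H_v r q \<and> card V = n)"

definition ramsey_R :: "nat \<Rightarrow> nat \<Rightarrow> nat" where
  "ramsey_R p s = (LEAST n. \<forall>V E. simple_graph V E \<and> card V \<ge> n \<longrightarrow>
      (\<exists>K. is_clique V E K \<and> card K = p) \<or> (\<exists>S. is_indep V E S \<and> card S = s))"

end

theory Submission
  imports Defs
begin

lemma construct:
  fixes V W :: "nat set" and E :: "nat \<Rightarrow> nat \<Rightarrow> bool" and m p r t :: nat
  assumes sg: "simple_graph V E" and WV: "W \<subseteq> V" and cW: "card W = 2*m - 1"
    and m1: "m \<ge> 1" and p1: "p \<ge> 1"
    and nocl: "\<not> (\<exists>K. is_clique V E K \<and> card K = p)"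
    and noind: "\<not> (\<exists>S. is_indep V E S \<and> card S = 3)"
    and tdef: "t + (m - 1) = r"
  shows "F_v r (t + p) \<le> r + m"
proof -
  have finV: "finite V" using sg unfolding simple_graph_def by blast
  have finW: "finite W" using finV WV finite_subset by blast
  have Eirr: "\<And>u. \<not> E u u" using sg unfolding simple_graph_def by blast
  have Esym: "\<And>u v. E u v \<Longrightarrow> E v u" using sg unfolding simple_graph_def by blast
  have EV: "\<And>u v. E u v \<Longrightarrow> u \<in> V \<and> v \<in> V" using sg unfolding simple_graph_def by blast
  obtain N where N: "W \<subseteq> {..<N}" using finW unfolding finite_nat_set_iff_bounded by blast
  define C where "C = {N..<N+t}"
  have cC: "card C = t" unfolding C_def by simp
  have finC: "finite C" unfolding C_def by simp
  have disj: "W \<inter> C = {}" using N unfolding C_def by auto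
  define V' where "V' = W \<union> C"
  define E' where "E' = (\<lambda>u v. (u \<in> W \<and> v \<in> W \<and> E u v) \<or> (u \<in> V' \<and> v \<in> V' \<and> u \<noteq> v \<and> (u \<in> C \<or> v \<in> C)))"
  have finV': "finite V'" unfolding V'_def using finW finC by simp
  have cV': "card V' = r + m" unfolding V'_def
    using card_Un_disjoint[OF finW finC disj] cW cC tdef m1 by simp
  have sg': "simple_graph V' E'"
    unfolding simple_graph_def using finV' Eirr Esym unfolding E'_def V'_def by blast
  have clW: "card K < p" if "K \<subseteq> W" "\<forall>u\<in>K. \<forall>v\<in>K. u \<noteq> v \<longrightarrow> E u v" for K
  proof (rule ccontr)
    assume "\<not> card K < p"
    then have "p \<le> card K" by simp
    then obtain B where "B \<subseteq> K" "card B = p" using obtain_subset_with_card_n by metis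
    then have "is_clique V E B" unfolding is_clique_def using that WV by blast
    with \<open>card B = p\<close> nocl show False by blast
  qed
  have indW: "card S \<le> 2" if "S \<subseteq> W" "\<forall>u\<in>S. \<forall>v\<in>S. \<not> E u v" for S
  proof (rule ccontr)
    assume "\<not> card S \<le> 2"
    then have "3 \<le> card S" by simp
    then obtain B where "B \<subseteq> S" "card B = 3" using obtain_subset_with_card_n by metis
    then have "is_indep V E B" unfolding is_indep_def using that WV by blast
    with \<open>card B = 3\<close> noind show False by blast
  qed
  have arrow: "vertex_arrow V' E' r"
    unfolding vertex_arrow_def
  proof (intro allI impI)
    fix f :: "nat \<Rightarrow> nat"
    assume fr: "\<forall>v\<in>V'. f v < r"
    show "\<exists>u\<in>V'. \<exists>v\<in>V'. E' u v \<and> f u = f v"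
    proof (rule ccontr)
      assume no: "\<not> (\<exists>u\<in>V'. \<exists>v\<in>V'. E' u v \<and> f u = f v)"
      have injC: "inj_on f C"
      proof (rule inj_onI)
        fix u v assume "u \<in> C" "v \<in> C" "f u = f v"
        show "u = v"
        proof (rule ccontr)
          assume "u \<noteq> v"
          then have "E' u v" unfolding E'_def V'_def using \<open>u \<in> C\<close> \<open>v \<in> C\<close> by blast
          then show False using no \<open>u \<in> C\<close> \<open>v \<in> C\<close> \<open>f u = f v\<close> unfolding V'_def by blast
        qed
      qed
      have dj: "f ` W \<inter> f ` C = {}"
      proof (rule ccontr)
        assume "f ` W \<inter> f ` C \<noteq> {}"
        then obtain w c where wc: "w \<in> W" "c \<in> C" "f w = f c" by blast
        have "w \<noteq> c" using disj wc by blast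
        then have "E' w c" unfolding E'_def V'_def using wc by blast
        then show False using no wc unfolding V'_def by blast
      qed
      have sub: "f ` W \<union> f ` C \<subseteq> {..<r}" using fr unfolding V'_def by blast
      have "card (f ` W \<union> f ` C) \<le> r" using card_mono[OF _ sub] by simp
      moreover have "card (f ` W \<union> f ` C) = card (f ` W) + t"
        using card_Un_disjoint[OF finite_imageI[OF finW] finite_imageI[OF finC] dj]
          card_image[OF injC] cC by simp
      ultimately have cfW: "card (f ` W) \<le> m - 1" using tdef by simp
      define A where "A = (\<lambda>s. {w \<in> W. f w = s})"
      have Ac: "card (A s) \<le> 2" for s
      proof (rule indW)
        show "A s \<subseteq> W" unfolding A_def by blast
        show "\<forall>u\<in>A s. \<forall>v\<in>A s. \<not> E u v"
        proof (intro ballI notI)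
          fix u v assume "u \<in> A s" "v \<in> A s" "E u v"
          then have "E' u v" "u \<in> V'" "v \<in> V'" "f u = f v"
            unfolding E'_def A_def V'_def by auto
          then show False using no by blast
        qed
      qed
      have "W = (\<Union>s\<in>f ` W. A s)" unfolding A_def by blast
      then have "card W \<le> (\<Sum>s\<in>f ` W. card (A s))"
        by (metis card_UN_le finite_imageI finW)
      also have "\<dots> \<le> (\<Sum>s\<in>f ` W. 2)" by (rule sum_mono) (use Ac in blast)
      also have "\<dots> = 2 * card (f ` W)" by simp
      also have "\<dots> \<le> 2 * (m - 1)" using cfW by simp
      finally show False using cW m1 by simp
    qed
  qed
  have cl: "clique_num V' E' < t + p"
  proof -
    let ?Q = "{card K | K. is_clique V' E' K}"
    have finQ: "finite ?Q"
    proof -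
      have "?Q \<subseteq> card ` Pow V'" unfolding is_clique_def by blast
      then show ?thesis using finV' finite_subset by blast
    qed
    have neQ: "?Q \<noteq> {}"
    proof -
      have "is_clique V' E' {}" unfolding is_clique_def by simp
      then show ?thesis by blast
    qed
    have bd: "\<forall>x\<in>?Q. x < t + p"
    proof
      fix x assume "x \<in> ?Q"
      then obtain K where K: "x = card K" "is_clique V' E' K" by blast
      have KV: "K \<subseteq> V'" using K unfolding is_clique_def by blast
      have finK: "finite K" using KV finV' finite_subset by blast
      have "K = (K \<inter> W) \<union> (K \<inter> C)" using KV unfolding V'_def by blast
      then have "card K \<le> card (K \<inter> W) + card (K \<inter> C)" by (metis card_Un_le)
      moreover have "card (K \<inter> C) \<le> t" using cC finC card_mono by (metis inf_le2)
      moreover have "card (K \<inter> W) < p"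
      proof (rule clW)
        show "K \<inter> W \<subseteq> W" by blast
        show "\<forall>u\<in>K \<inter> W. \<forall>v\<in>K \<inter> W. u \<noteq> v \<longrightarrow> E u v"
        proof (intro ballI impI)
          fix u v assume uv: "u \<in> K \<inter> W" "v \<in> K \<inter> W" "u \<noteq> v"
          then have "E' u v" using K(2) unfolding is_clique_def by blast
          moreover have "u \<notin> C" "v \<notin> C" using uv disj by blast+
          ultimately show "E u v" unfolding E'_def by blast
        qed
      qed
      ultimately show "x < t + p" using K(1) by simp
    qed
    show ?thesis unfolding clique_num_def using bd finQ neQ by (simp add: Max_less_iff)
  qed
  have "(V', E') \<in> H_v r (t + p)" unfolding H_v_def using sg' arrow cl by simp
  then have "F_v r (t + p) \<le> card V'" unfolding F_v_def by (intro Least_le) blast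
  then show ?thesis using cV' by simp
qed

theorem lemma2p3:
  fixes m k :: nat
  assumes "k \<ge> 1" and "m \<ge> k + 3"
    and "2 * m - 1 < ramsey_R (m - k) 3"
    and "\<forall>r. r \<ge> m - 1 \<longrightarrow> F_v r (r - k + 1) \<ge> r + m"
  shows "\<forall>r. r \<ge> m - 1 \<longrightarrow> F_v r (r - k + 1) = r + m"
proof -
  let ?P = "\<lambda>n. \<forall>V E. simple_graph V E \<and> card V \<ge> n \<longrightarrow>
      (\<exists>K. is_clique V E K \<and> card K = m - k) \<or> (\<exists>S. is_indep V E S \<and> card S = 3)"
  have "\<not> ?P (2 * m - 1)"
  proof
    assume "?P (2 * m - 1)"
    then have "ramsey_R (m - k) 3 \<le> 2 * m - 1" unfolding ramsey_R_def by (rule Least_le)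
    then show False using assms(3) by simp
  qed
  then obtain V E where G: "simple_graph V E" "card V \<ge> 2 * m - 1"
    "\<not> (\<exists>K. is_clique V E K \<and> card K = m - k)" "\<not> (\<exists>S. is_indep V E S \<and> card S = 3)"
    by blast
  obtain W where W: "W \<subseteq> V" "card W = 2 * m - 1"
    using obtain_subset_with_card_n[OF G(2)] by metis
  show ?thesis
  proof (intro allI impI)
    fix r assume r: "r \<ge> m - 1"
    have eq: "r - k + 1 = (r + 1 - m) + (m - k)" using r assms(2) by simp
    have "F_v r ((r + 1 - m) + (m - k)) \<le> r + m"
      by (rule construct[OF G(1) W(1) W(2) _ _ G(3) G(4)]) (use r assms(2) in auto)
    then show "F_v r (r - k + 1) = r + m" using assms(4) r eq by (metis antisym)
  qed
qed

end
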